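(* Let $x$ be an aperiodic infinite word over a finite alphabet which is the sesquipower induced by a sequence $\{v_n\}_{n=1}^\infty$ of finite words, and suppose $x$ avoids $k$-anti-powers for some integer $k\ge2$. Then there exists a nonempty word $u$ of length at most $k-1$ such that for every $\ell>0$ there is some $n>0$ such that $u^\ell$ is a factor of $v_n$.
   Context: Given a sequence $\{v_n\}_{n=1}^\infty$ of finite words, define $w_1=v_1$ and $w_{n+1}=w_nv_nw_n$; the limit of $\{w_n\}$ is the sesquipower induced by $\{v_n\}$. An infinite word is aperiodic if no suffix of it equals $u^\omega$ for a finite word $u$. A factor is a contiguous subword; $u^\ell$ is $\ell$ concatenated copies of $u$. A $k$-anti-power is a word $w=w_1\cdots w_k$ with $|w_1|=\cdots=|w_k|\ge1$ and $w_1,\dots,w_k$ pairwise distinct; $x$ avoids $k$-anti-powers if none of its factors is a $k$-anti-power. *)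

theory Defs
  imports Main "HOL-Library.Sublist"
begin

text \<open>The sequence v_1, v_2, ... is a function v :: nat => 'a list (v 0 is unused).
  sesq v n is the word w_(n+1): w_1 = v_1, w_(n+1) = w_n v_n w_n.\<close>

fun sesq :: "(nat \<Rightarrow> 'a list) \<Rightarrow> nat \<Rightarrow> 'a list" where
  "sesq v 0 = v 1"
| "sesq v (Suc n) = sesq v n @ v (Suc n) @ sesq v n"

definition is_sesquipower :: "(nat \<Rightarrow> 'a) \<Rightarrow> (nat \<Rightarrow> 'a list) \<Rightarrow> bool" where
  "is_sesquipower x v \<longleftrightarrow>
     (\<forall>n. \<forall>i < length (sesq v n). x i = sesq v n ! i) \<and>
     (\<forall>N. \<exists>n. N \<le> length (sesq v n))"

definition aperiodic :: "(nat \<Rightarrow> 'a) \<Rightarrow> bool" where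
  "aperiodic x \<longleftrightarrow>
     \<not> (\<exists>N u. u \<noteq> [] \<and> (\<forall>i. x (N + i) = u ! (i mod length u)))"

definition inf_factor :: "'a list \<Rightarrow> (nat \<Rightarrow> 'a) \<Rightarrow> bool" where
  "inf_factor y x \<longleftrightarrow> (\<exists>i. y = map x [i..<i + length y])"

definition anti_power :: "nat \<Rightarrow> 'a list \<Rightarrow> bool" where
  "anti_power k w \<longleftrightarrow>
     (\<exists>m \<ge> 1. length w = k * m \<and>
        distinct (map (\<lambda>j. take m (drop (j * m) w)) [0..<k]))"

definition avoids_anti_powers :: "nat \<Rightarrow> (nat \<Rightarrow> 'a) \<Rightarrow> bool" where
  "avoids_anti_powers k x \<longleftrightarrow> (\<forall>y. inf_factor y x \<longrightarrow> \<not> anti_power k y)"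

definition lpow :: "'a list \<Rightarrow> nat \<Rightarrow> 'a list" where
  "lpow u l = concat (replicate l u)"

end

theory Submission
  imports Defs
begin


definition per :: "nat \<Rightarrow> 'a list \<Rightarrow> bool" where
  "per d w \<longleftrightarrow> (\<forall>i. i + d < length w \<longrightarrow> w ! i = w ! (i + d))"

lemma per_sublist:
  assumes "per d w" "sublist y w"
  shows "per d y"
proof -
  obtain p s where w: "w = p @ y @ s" using assms(2) by (auto simp: sublist_def)
  show ?thesis unfolding per_def
  proof (intro allI impI)
    fix i assume i: "i + d < length y"
    have h: "length p + i + d < length w" using i w by simp
    have "w ! (length p + i) = w ! (length p + i + d)"
      using assms(1) h unfolding per_def by blast
    moreover have "w ! (length p + i) = y ! i" using i w by (simp add: nth_append)
    moreover have "w ! (length p + i + d) = y ! (i + d)" using i w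
      by (simp add: nth_append add.assoc del: append_assoc)
    ultimately show "y ! i = y ! (i + d)" by simp
  qed
qed

lemma sesq_prefix: "n \<le> n' \<Longrightarrow> prefix (sesq v n) (sesq v n')"
proof (induction n' rule: dec_induct)
  case base then show ?case by simp
next
  case (step m)
  then show ?case by (metis prefix_append sesq.simps(2))
qed

lemma sesq_len_mono: "n \<le> n' \<Longrightarrow> length (sesq v n) \<le> length (sesq v n')"
  using sesq_prefix prefix_length_le by blast

lemma notper_mono:
  assumes "\<not> per d (sesq v n0)" "n0 \<le> n"
  shows "\<not> per d (sesq v n)"
  using assms per_sublist sesq_prefix prefix_imp_sublist by blast

lemma suffix_bound_aux:
  assumes "\<not> per d (sesq v n0)"
  shows "suffix s (sesq v (n0 + j)) \<Longrightarrow> per d s \<Longrightarrow> length s < length (sesq v n0)"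
proof (induction j arbitrary: s)
  case 0
  show ?case
  proof (rule ccontr)
    assume "\<not> length s < length (sesq v n0)"
    moreover have "length s \<le> length (sesq v n0)" using 0 suffix_length_le by fastforce
    ultimately have "s = sesq v n0" using 0
      by (metis add_0_right order.refl not_less suffix_length_suffix suffix_order.antisym suffix_order.order_refl)
    then show False using 0 assms by simp
  qed
next
  case (Suc j)
  let ?A = "sesq v (n0 + j)"
  have W: "sesq v (n0 + Suc j) = ?A @ v (Suc (n0 + j)) @ ?A" by simp
  have sA: "suffix ?A (sesq v (n0 + Suc j))" by (simp only: W) (simp add: suffix_appendI)
  show ?case
  proof (cases "length ?A \<le> length s")
    case True
    then have "suffix ?A s" using suffix_length_suffix[OF sA Suc.prems(1)] by simp
    then have "per d ?A" using Suc.prems(2) per_sublist by blast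
    then show ?thesis using notper_mono[OF assms, of "n0 + j"] by simp
  next
    case False
    then have "suffix s ?A" using suffix_length_suffix[OF Suc.prems(1) sA] by simp
    then show ?thesis using Suc.IH Suc.prems(2) by blast
  qed
qed

lemma suffix_bound:
  assumes "\<not> per d (sesq v n0)" "suffix s (sesq v n)" "per d s"
  shows "length s \<le> length (sesq v n0)"
proof (cases "n0 \<le> n")
  case True
  then obtain j where "n = n0 + j" using le_Suc_ex by blast
  then show ?thesis using suffix_bound_aux[OF assms(1)] assms(2,3) by fastforce
next
  case False
  then show ?thesis using sesq_len_mono[of n n0 v] assms(2) suffix_length_le
    by (metis le_trans nat_le_linear)
qed

lemma prefix_bound:
  assumes "\<not> per d (sesq v n0)" "prefix p (sesq v n)" "per d p"
  shows "length p \<le> length (sesq v n0)"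
proof (cases "n0 \<le> n")
  case True
  show ?thesis
  proof (rule ccontr)
    assume "\<not> ?thesis"
    then have "prefix (sesq v n0) p"
      using prefix_length_prefix[OF sesq_prefix[OF True] assms(2)] by simp
    then show False using assms per_sublist prefix_imp_sublist by blast
  qed
next
  case False
  then show ?thesis using sesq_len_mono[of n n0 v] assms(2) prefix_length_le
    by (metis le_trans nat_le_linear)
qed

lemma localize:
  assumes "\<not> per d (sesq v n0)"
  shows "sublist z (sesq v N) \<Longrightarrow> per d z \<Longrightarrow>
    \<exists>M\<ge>1. \<exists>y. sublist y (v M) \<and> per d y \<and> length z \<le> length y + 2 * length (sesq v n0)"
proof (induction N arbitrary: z)
  case 0
  then show ?case by (intro exI[of _ 1]) auto
next
  case (Suc N)
  let ?A = "sesq v N" and ?V = "v (Suc N)" and ?B = "length (sesq v n0)"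
  have W: "sesq v (Suc N) = ?A @ ?V @ ?A" by simp
  from Suc.prems(1) have "sublist z (?A @ (?V @ ?A))" by (simp only: W)
  then consider (a) "sublist z ?A" | (b) "sublist z (?V @ ?A)"
    | (c) xs1 xs2 where "z = xs1 @ xs2" "suffix xs1 ?A" "prefix xs2 (?V @ ?A)"
    unfolding sublist_append by blast
  then show ?case
  proof cases
    case a then show ?thesis using Suc by blast
  next
    case b
    then consider (b1) "sublist z ?V" | (b2) "sublist z ?A"
      | (b3) xs1 xs2 where "z = xs1 @ xs2" "suffix xs1 ?V" "prefix xs2 ?A"
      unfolding sublist_append by blast
    then show ?thesis
    proof cases
      case b1 then show ?thesis using Suc.prems by (intro exI[of _ "Suc N"]) auto
    next
      case b2 then show ?thesis using Suc by blast
    next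
      case b3
      have "per d xs2" using b3 Suc.prems(2) per_sublist by blast
      then have "length xs2 \<le> ?B" using prefix_bound[OF assms] b3 by blast
      moreover have "per d xs1" using b3 Suc.prems(2) per_sublist by blast
      ultimately show ?thesis using b3 by (intro exI[of _ "Suc N"]) (auto intro!: exI[of _ xs1])
    qed
  next
    case c
    have p1: "per d xs1" using c Suc.prems(2) per_sublist by blast
    then have l1: "length xs1 \<le> ?B" using suffix_bound[OF assms] c by blast
    from c(3) consider (c1) "prefix xs2 ?V" | (c2) us where "xs2 = ?V @ us" "prefix us ?A"
      unfolding prefix_append by blast
    then show ?thesis
    proof cases
      case c1
      have "per d xs2" using c Suc.prems(2) per_sublist by blast
      then show ?thesis using c c1 l1 by (intro exI[of _ "Suc N"]) (auto intro!: exI[of _ xs2])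
    next
      case c2
      have "per d us" using c c2 Suc.prems(2) per_sublist
        by (metis append_assoc sublist_append_leftI)
      then have "length us \<le> ?B" using prefix_bound[OF assms] c2 by blast
      moreover have "per d ?V" using c c2 Suc.prems(2) per_sublist by (metis sublist_appendI)
      ultimately show ?thesis using c c2 l1 by (intro exI[of _ "Suc N"]) (auto intro!: exI[of _ ?V])
    qed
  qed
qed



definition xper :: "(nat \<Rightarrow> 'a) \<Rightarrow> nat \<Rightarrow> nat \<Rightarrow> nat \<Rightarrow> bool" where
  "xper x d a b \<longleftrightarrow> (\<forall>q. a \<le> q \<longrightarrow> q + d < b \<longrightarrow> x q = x (q + d))"

lemma noanti:
  assumes "avoids_anti_powers k x" "m \<ge> 1"
  shows "\<exists>i j. i < j \<and> j < k \<and> (\<forall>t<m. x (s + i*m + t) = x (s + j*m + t))"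
proof -
  let ?y = "map x [s..<s + k*m]"
  have "inf_factor ?y x" unfolding inf_factor_def by (intro exI[of _ s]) simp
  hence "\<not> anti_power k ?y" using assms(1) unfolding avoids_anti_powers_def by blast
  hence "\<not> distinct (map (\<lambda>j. take m (drop (j*m) ?y)) [0..<k])"
    using assms(2) unfolding anti_power_def by auto
  then obtain i j where ij: "i < k" "j < k" "i \<noteq> j"
    "take m (drop (i*m) ?y) = take m (drop (j*m) ?y)"
    by (auto simp: distinct_conv_nth)
  have blk: "take m (drop (i'*m) ?y) ! t = x (s + i'*m + t)" if "i' < k" "t < m" for i' t
  proof -
    have "(i' + 1) * m \<le> k * m" using that by (intro mult_right_mono) auto
    then have "i'*m + t < k*m" using that by (simp add: algebra_simps)
    then show ?thesis using that by (simp add: add.assoc)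
  qed
  have eqb: "x (s + i*m + t) = x (s + j*m + t)" if "t < m" for t
  proof -
    have "x (s + i*m + t) = take m (drop (i*m) ?y) ! t" by (rule blk[OF ij(1) that, symmetric])
    also have "\<dots> = take m (drop (j*m) ?y) ! t" by (simp only: ij(4))
    also have "\<dots> = x (s + j*m + t)" by (rule blk[OF ij(2) that])
    finally show ?thesis .
  qed
  show ?thesis
  proof (cases "i < j")
    case True
    then show ?thesis using ij eqb by blast
  next
    case False
    then have "j < i" using ij by simp
    then show ?thesis using ij eqb by (intro exI[of _ j] exI[of _ i]) simp
  qed
qed

lemma xper_shift:
  assumes "xper x P a b" "a \<le> q" "q + c*P < b"
  shows "x q = x (q + c*P)"
  using assms(3)
proof (induction c)
  case 0 then show ?case by simp
next
  case (Suc c)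
  have "x q = x (q + c*P)" using Suc by simp
  also have "\<dots> = x (q + c*P + P)" using assms(1,2) Suc.prems unfolding xper_def by simp
  finally show ?case by (simp add: algebra_simps)
qed

lemma xper_mono:
  "xper x d a b \<Longrightarrow> a \<le> a' \<Longrightarrow> b' \<le> b \<Longrightarrow> xper x d a' b'"
  unfolding xper_def by auto

lemma lemA:
  assumes "avoids_anti_powers k x" "P \<ge> 1" "xper x P a b" "a + k*(P+1) \<le> b"
  shows "\<exists>\<delta>\<ge>1. \<delta> \<le> k - 1 \<and> xper x \<delta> a b"
proof -
  obtain i j where ij: "i < j" "j < k" and eq: "\<forall>t<P+1. x (a + i*(P+1) + t) = x (a + j*(P+1) + t)"
    using noanti[OF assms(1), of "P+1" a] by auto
  define \<delta> where "\<delta> = j - i"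
  have jd: "j = i + \<delta>" and d1: "\<delta> \<ge> 1" using ij(1) unfolding \<delta>_def by auto
  define b0 where "b0 = a + i*(P+1)"
  have jk: "(j+1)*(P+1) \<le> k*(P+1)" using ij by (intro mult_right_mono) auto
  have e1: "b0 + \<delta> + P + \<delta>*P = a + j*(P+1) + P" unfolding b0_def jd by (simp add: algebra_simps)
  have e2: "a + j*(P+1) + P < a + (j+1)*(P+1)" by (simp add: algebra_simps)
  have bnd: "b0 + \<delta> + P + \<delta>*P < b" using e1 e2 jk assms(4) by linarith
  have claim: "x (b0 + t) = x (b0 + \<delta> + t)" if "t \<le> P" for t
  proof -
    have c1: "x (a + i*(P+1) + t) = x (a + j*(P+1) + t)" using eq that by simp
    have c2: "b0 + \<delta> + t + \<delta>*P = a + j*(P+1) + t" unfolding b0_def jd by (simp add: algebra_simps)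
    have "x (b0 + t) = x (b0 + \<delta> + t + \<delta>*P)" unfolding c2 using c1 unfolding b0_def .
    also have "\<dots> = x (b0 + \<delta> + t)"
      using xper_shift[OF assms(3), of "b0 + \<delta> + t" \<delta>] bnd that unfolding b0_def by auto
    finally show ?thesis .
  qed
  have case1: "x q = x (q + \<delta>)" if "b0 \<le> q" "q + \<delta> < b" for q
    using that
  proof (induction q rule: less_induct)
    case (less q)
    show ?case
    proof (cases "q \<le> b0 + P")
      case True
      then show ?thesis using claim[of "q - b0"] less.prems by (simp add: add.commute add.left_commute)
    next
      case False
      define q' where "q' = q - P"
      have q': "q = q' + P" "b0 \<le> q'" "q' < q" using False assms(2) unfolding q'_def by auto
      have "x q' = x (q' + \<delta>)" using less.IH[of q'] q' less.prems by auto
      moreover have "x q' = x q" using assms(3) q' less.prems unfolding xper_def b0_def by auto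
      moreover have "x (q' + \<delta>) = x (q + \<delta>)" using assms(3) q' less.prems unfolding xper_def b0_def
        by (auto simp: algebra_simps)
      ultimately show ?thesis by simp
    qed
  qed
  have case2: "x q = x (q + \<delta>)" if "a \<le> q" "q < b0" for q
  proof -
    have "\<forall>q. a \<le> q \<longrightarrow> q < b0 \<longrightarrow> b0 - q \<le> n \<longrightarrow> x q = x (q + \<delta>)" for n
    proof (induction n)
      case 0 then show ?case by auto
    next
      case (Suc n)
      show ?case
      proof (intro allI impI)
        fix q assume q: "a \<le> q" "q < b0" "b0 - q \<le> Suc n"
        have h1: "x q = x (q + P)" using assms(3) q bnd unfolding xper_def by auto
        have h2: "x (q + P) = x (q + P + \<delta>)"
        proof (cases "b0 \<le> q + P")
          case True then show ?thesis using case1 q bnd by auto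
        next
          case False then show ?thesis using Suc.IH q assms(2) by auto
        qed
        have h3: "x (q + \<delta>) = x (q + \<delta> + P)" using assms(3) q bnd unfolding xper_def by auto
        show "x q = x (q + \<delta>)" using h1 h2 h3 by (simp add: algebra_simps)
      qed
    qed
    then show ?thesis using that by blast
  qed
  have "xper x \<delta> a b" unfolding xper_def
  proof (intro allI impI)
    fix q assume "a \<le> q" "q + \<delta> < b"
    then show "x q = x (q + \<delta>)" using case1 case2 by (cases "b0 \<le> q") auto
  qed
  moreover have "\<delta> \<le> k - 1" using ij jd by auto
  ultimately show ?thesis using d1 by blast
qed



lemma runs:
  assumes "avoids_anti_powers k x" "k \<ge> 2"
  shows "\<exists>a \<delta>. 1 \<le> \<delta> \<and> \<delta> \<le> k - 1 \<and> xper x \<delta> a (a + L)"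
proof -
  define K where "K = k*k"
  define M where "M = L + k*(k*K+1) + k*K + 1"
  have "\<forall>m\<in>{M..M+K}. \<exists>p. fst p < snd p \<and> snd p < k \<and> (\<forall>t<m. x (fst p * m + t) = x (snd p * m + t))"
  proof
    fix m assume "m \<in> {M..M+K}"
    then have "m \<ge> 1" unfolding M_def by auto
    then obtain i j where "i < j" "j < k" "\<forall>t<m. x (0 + i*m + t) = x (0 + j*m + t)"
      using noanti[OF assms(1), of m 0] by blast
    then show "\<exists>p. fst p < snd p \<and> snd p < k \<and> (\<forall>t<m. x (fst p * m + t) = x (snd p * m + t))"
      by (intro exI[of _ "(i,j)"]) auto
  qed
  then obtain f where f: "\<And>m. m\<in>{M..M+K} \<Longrightarrow> fst (f m) < snd (f m) \<and> snd (f m) < k \<and>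
      (\<forall>t<m. x (fst (f m) * m + t) = x (snd (f m) * m + t))"
    by metis
  have "\<not> inj_on f {M..M+K}"
  proof
    assume inj: "inj_on f {M..M+K}"
    have "f ` {M..M+K} \<subseteq> {..<k} \<times> {..<k}"
    proof (rule image_subsetI)
      fix m assume "m \<in> {M..M+K}"
      then have "fst (f m) < k" "snd (f m) < k" using f[of m] by auto
      then show "f m \<in> {..<k} \<times> {..<k}" by (simp add: mem_Times_iff)
    qed
    then have "card {M..M+K} \<le> card ({..<k} \<times> {..<k})"
      using card_inj_on_le[OF inj] by blast
    then show False unfolding K_def by (simp add: card_cartesian_product)
  qed
  then obtain m1 m2 where m12: "m1 \<in> {M..M+K}" "m2 \<in> {M..M+K}" "m1 \<noteq> m2" "f m1 = f m2"
    unfolding inj_on_def by blast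
  obtain m m' where mm: "m \<in> {M..M+K}" "m' \<in> {M..M+K}" "m < m'" "f m = f m'"
  proof (cases "m1 < m2")
    case True then show ?thesis using that m12 by blast
  next
    case False then show ?thesis using that[of m2 m1] m12 by auto
  qed
  define i where "i = fst (f m)"
  define j where "j = snd (f m)"
  define r where "r = m' - m"
  define \<delta> where "\<delta> = j - i"
  have fm: "i < j" "j < k" "\<forall>t<m. x (i * m + t) = x (j * m + t)"
    using f[OF mm(1)] unfolding i_def j_def by auto
  have m'r: "m' = m + r" using mm unfolding r_def by auto
  have fm': "\<forall>t<m+r. x (i * (m+r) + t) = x (j * (m+r) + t)"
    using f[OF mm(2)] mm(4) unfolding i_def j_def m'r by auto
  have r1: "r \<ge> 1" "r \<le> K" using mm unfolding r_def by auto
  have jd: "j = i + \<delta>" "\<delta> \<ge> 1" using fm unfolding \<delta>_def by auto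
  define P where "P = \<delta> * r"
  have P1: "P \<ge> 1" unfolding P_def using r1 jd by simp
  have PK: "P \<le> k * K" unfolding P_def using r1 jd fm by (intro mult_le_mono) auto
  have irK: "i * r \<le> k * K" using r1 fm by (intro mult_le_mono) auto
  have mM: "m \<ge> M" using mm by auto
  define A0 where "A0 = j*m + i*r"
  define B0 where "B0 = j*m + m + P"
  have run: "xper x P A0 B0" unfolding xper_def
  proof (intro allI impI)
    fix q assume q: "A0 \<le> q" "q + P < B0"
    obtain e where e: "q = A0 + e" using q(1) le_Suc_ex by blast
    have e2: "i*r + e < m" using q e unfolding A0_def B0_def by simp
    have "x (i*m + (i*r + e)) = x (j*m + (i*r + e))" using fm(3) e2 by blast
    moreover have "x (i*(m+r) + e) = x (j*(m+r) + e)" using fm' e2 by simp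
    moreover have "i*(m+r) + e = i*m + (i*r + e)" by (simp add: algebra_simps)
    moreover have "j*m + (i*r + e) = q" unfolding e A0_def by simp
    moreover have "j*(m+r) + e = q + P" unfolding e A0_def P_def jd by (simp add: algebra_simps)
    ultimately show "x q = x (q + P)" by metis
  qed
  have B0b: "A0 + k*(P+1) + L \<le> B0"
  proof -
    have kP: "k*P \<le> k*(k*K)" by (rule mult_le_mono2[OF PK])
    have e1: "k*(P+1) = k*P + k" by (simp add: algebra_simps)
    have e2: "k*(k*K+1) = k*(k*K) + k" by (simp add: algebra_simps)
    have "m \<ge> L + k*(k*K) + k + k*K + 1" using mM e2 unfolding M_def by linarith
    then have "A0 + k*(P+1) + L \<le> j*m + i*r + k*P + k + L" using e1 unfolding A0_def by linarith
    also have "\<dots> \<le> j*m + m + P" using kP irK \<open>m \<ge> L + k*(k*K) + k + k*K + 1\<close> by linarith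
    finally show ?thesis unfolding B0_def .
  qed
  obtain \<delta>' where d': "\<delta>' \<ge> 1" "\<delta>' \<le> k - 1" "xper x \<delta>' A0 (A0 + k*(P+1) + L)"
    using lemA[OF assms(1) P1 xper_mono[OF run order.refl B0b]] by auto
  have "xper x \<delta>' A0 (A0 + L)" using xper_mono[OF d'(3)] by simp
  then show ?thesis using d' by blast
qed



lemma aper_level:
  assumes "aperiodic x" "is_sesquipower x v" "d \<ge> 1"
  shows "\<exists>n. \<not> per d (sesq v n)"
proof (rule ccontr)
  assume "\<not> ?thesis"
  then have all: "\<And>n. per d (sesq v n)" by blast
  have xp: "x i = x (i + d)" for i
  proof -
    obtain n where n: "i + d + 1 \<le> length (sesq v n)" using assms(2) unfolding is_sesquipower_def by blast
    have "sesq v n ! i = sesq v n ! (i + d)" using all[of n] n unfolding per_def by auto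
    moreover have "x i = sesq v n ! i" "x (i + d) = sesq v n ! (i + d)"
      using assms(2) n unfolding is_sesquipower_def by auto
    ultimately show ?thesis by simp
  qed
  define u where "u = map x [0..<d]"
  have xu: "x i = u ! (i mod d)" for i
  proof (induction i rule: less_induct)
    case (less i)
    show ?case
    proof (cases "i < d")
      case True then show ?thesis unfolding u_def by simp
    next
      case False
      then have "x i = x (i - d)" using xp[of "i - d"] by simp
      also have "\<dots> = u ! ((i - d) mod d)" using less.IH[of "i - d"] False assms(3) by simp
      also have "(i - d) mod d = i mod d" using False by (simp add: le_mod_geq)
      finally show ?thesis .
    qed
  qed
  have "u \<noteq> []" "length u = d" using assms(3) unfolding u_def by auto
  then have "\<exists>N u. u \<noteq> [] \<and> (\<forall>i. x (N + i) = u ! (i mod length u))"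
    using xu by (intro exI[of _ 0] exI[of _ u]) simp
  then show False using assms(1) unfolding aperiodic_def by blast
qed

lemma level_uniform:
  assumes "aperiodic x" "is_sesquipower x v"
  shows "\<exists>n0. \<forall>d. 1 \<le> d \<and> d \<le> K \<longrightarrow> \<not> per d (sesq v n0)"
proof (induction K)
  case 0 then show ?case by auto
next
  case (Suc K)
  obtain n0 where n0: "\<forall>d. 1 \<le> d \<and> d \<le> K \<longrightarrow> \<not> per d (sesq v n0)" using Suc by blast
  obtain n1 where n1: "\<not> per (Suc K) (sesq v n1)" using aper_level[OF assms, of "Suc K"] by auto
  have "\<forall>d. 1 \<le> d \<and> d \<le> Suc K \<longrightarrow> \<not> per d (sesq v (max n0 n1))"
  proof (intro allI impI)
    fix d assume d: "1 \<le> d \<and> d \<le> Suc K"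
    show "\<not> per d (sesq v (max n0 n1))"
    proof (cases "d \<le> K")
      case True then show ?thesis using n0 d notper_mono[of d v n0 "max n0 n1"] by auto
    next
      case False then have "d = Suc K" using d by simp
      then show ?thesis using n1 notper_mono[of d v n1 "max n0 n1"] by auto
    qed
  qed
  then show ?case by blast
qed

lemma lpow_add: "lpow u (a + b) = lpow u a @ lpow u b"
  unfolding lpow_def by (simp add: replicate_add)

lemma lpow_Suc: "lpow u (Suc l) = u @ lpow u l"
  unfolding lpow_def by simp

lemma lpow_0: "lpow u 0 = []"
  unfolding lpow_def by simp

lemma lpow_per: "per d y \<Longrightarrow> l*d \<le> length y \<Longrightarrow> lpow (take d y) l = take (l*d) y"
proof (induction l arbitrary: y)
  case 0 then show ?case by (simp add: lpow_0)
next
  case (Suc l)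
  show ?case
  proof (cases "l = 0")
    case True then show ?thesis by (simp add: lpow_Suc lpow_0)
  next
    case False
    have "2*d \<le> Suc l * d" using False by (intro mult_le_mono1) simp
    then have len: "2*d \<le> length y" using Suc.prems(2) by linarith
    have pd: "per d (drop d y)" using Suc.prems(1) per_sublist suffix_drop suffix_imp_sublist by blast
    have ld: "l*d \<le> length (drop d y)" using Suc.prems(2) by simp
    have td: "take d (drop d y) = take d y"
    proof (rule nth_equalityI)
      show "length (take d (drop d y)) = length (take d y)" using len by simp
    next
      fix i assume "i < length (take d (drop d y))"
      then have i: "i < d" "i + d < length y" using len by auto
      then have "y ! i = y ! (i + d)" using Suc.prems(1) unfolding per_def by blast
      then show "take d (drop d y) ! i = take d y ! i" using i by (simp add: add.commute)
    qed
    have "lpow (take d y) (Suc l) = take d y @ take (l*d) (drop d y)"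
      using Suc.IH[OF pd ld] td by (simp add: lpow_Suc)
    also have "\<dots> = take (d + l*d) y" by (simp add: take_add)
    finally show ?thesis by (simp add: add.commute)
  qed
qed

lemma extract_run:
  assumes "is_sesquipower x v" "xper x d a (a + L)"
  shows "\<exists>N z. sublist z (sesq v N) \<and> per d z \<and> length z = L"
proof -
  obtain N where N: "a + L \<le> length (sesq v N)" using assms(1) unfolding is_sesquipower_def by blast
  define W where "W = sesq v N"
  define z where "z = take L (drop a W)"
  have lz: "length z = L" using N unfolding z_def W_def by simp
  have zn: "z ! i = x (a + i)" if "i < L" for i
  proof -
    have "z ! i = W ! (a + i)" using that N unfolding z_def W_def by simp
    also have "\<dots> = x (a + i)"
    proof -
      have "a + i < length (sesq v N)" using that N by simp
      then show ?thesis using assms(1) unfolding is_sesquipower_def W_def by metis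
    qed
    finally show ?thesis .
  qed
  have "per d z" unfolding per_def
  proof (intro allI impI)
    fix i assume i: "i + d < length z"
    have "x (a + i) = x (a + i + d)" using assms(2) i lz unfolding xper_def by auto
    then show "z ! i = z ! (i + d)" using zn i lz by (simp add: add.assoc)
  qed
  moreover have "sublist z W"
  proof -
    have eq: "W = take a W @ z @ drop L (drop a W)" unfolding z_def
      by (simp only: append_take_drop_id)
    show ?thesis unfolding sublist_def using eq by blast
  qed
  ultimately show ?thesis using lz unfolding W_def by blast
qed

lemma letters:
  assumes "is_sesquipower x v" "M \<ge> 1"
  shows "set (v M) \<subseteq> range x"
proof -
  have s: "set (sesq v n) \<subseteq> range x" for n
  proof
    fix e assume "e \<in> set (sesq v n)"
    then obtain i where "i < length (sesq v n)" "e = sesq v n ! i" by (auto simp: in_set_conv_nth)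
    then have "e = x i" using assms(1) unfolding is_sesquipower_def by metis
    then show "e \<in> range x" by simp
  qed
  obtain M' where "M = Suc M'" using assms(2) by (cases M) auto
  then have "set (v M) \<subseteq> set (sesq v M)" by auto
  then show ?thesis using s by blast
qed



theorem theorem4p14:
  fixes x :: "nat \<Rightarrow> 'a" and v :: "nat \<Rightarrow> 'a list" and k :: nat
  assumes "finite (range x)"
    and "aperiodic x"
    and "is_sesquipower x v"
    and "k \<ge> 2"
    and "avoids_anti_powers k x"
  shows "\<exists>u. u \<noteq> [] \<and> length u \<le> k - 1 \<and>
           (\<forall>l > 0. \<exists>n > 0. sublist (lpow u l) (v n))"
proof -
  obtain n0 where n0: "\<forall>d. 1 \<le> d \<and> d \<le> k - 1 \<longrightarrow> \<not> per d (sesq v n0)"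
    using level_uniform[OF assms(2,3)] by blast
  define B where "B = length (sesq v n0)"
  define U where "U = {u. set u \<subseteq> range x \<and> length u \<le> k - 1}"
  have finU: "finite U" unfolding U_def using finite_lists_length_le[OF assms(1)] by blast
  define G where "G u l \<longleftrightarrow> u \<noteq> [] \<and> length u \<le> k - 1 \<and> (\<exists>n>0. sublist (lpow u l) (v n))" for u l
  have Gmono: "G u l'" if "G u l" "l' \<le> l" for u l l'
  proof -
    have "lpow u l = lpow u l' @ lpow u (l - l')" using that(2) lpow_add[of u l' "l - l'"] by simp
    then have "sublist (lpow u l') (lpow u l)" by (metis sublist_append_rightI)
    then show ?thesis using that(1) unfolding G_def using sublist_order.order.trans by blast
  qed
  have claim: "\<exists>u\<in>U. G u l" for l
  proof -
    obtain a \<delta> where r: "1 \<le> \<delta>" "\<delta> \<le> k - 1" "xper x \<delta> a (a + (Suc l * (k - 1) + 2 * B))"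
      using runs[OF assms(5) assms(4)] by blast
    obtain N z where z: "sublist z (sesq v N)" "per \<delta> z" "length z = Suc l * (k - 1) + 2 * B"
      using extract_run[OF assms(3) r(3)] by blast
    have np: "\<not> per \<delta> (sesq v n0)" using n0 r by blast
    obtain M y where y: "M \<ge> 1" "sublist y (v M)" "per \<delta> y" "length z \<le> length y + 2 * B"
      using localize[OF np z(1) z(2)] unfolding B_def by blast
    have ly: "Suc l * (k - 1) \<le> length y" using y(4) z(3) by simp
    have "Suc l * \<delta> \<le> Suc l * (k - 1)" using r(2) by (rule mult_le_mono2)
    then have ld: "Suc l * \<delta> \<le> length y" using ly by linarith
    have ld2: "l * \<delta> \<le> length y" "\<delta> \<le> length y" using ld by auto
    define u where "u = take \<delta> y"
    have lp: "lpow u l = take (l * \<delta>) y" unfolding u_def using lpow_per[OF y(3) ld2(1)] .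
    have "sublist (take (l * \<delta>) y) y" by (rule prefix_imp_sublist) (rule take_is_prefix)
    then have s: "sublist (lpow u l) (v M)" using lp y(2) sublist_order.order.trans by metis
    have lu: "length u = \<delta>" unfolding u_def using ld2 by simp
    have "set u \<subseteq> set y" unfolding u_def by (rule set_take_subset)
    also have "\<dots> \<subseteq> set (v M)" using y(2) by (rule set_mono_sublist)
    also have "\<dots> \<subseteq> range x" using letters[OF assms(3) y(1)] .
    finally have "u \<in> U" unfolding U_def using lu r by simp
    moreover have "G u l"
    proof -
      have "M > 0" using y(1) by simp
      then have "\<exists>n>0. sublist (lpow u l) (v n)" using s by blast
      moreover have "u \<noteq> []" using lu r(1) by auto
      ultimately show ?thesis unfolding G_def using lu r(2) by simp
    qed
    ultimately show ?thesis by blast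
  qed
  show ?thesis
  proof (rule ccontr)
    assume neg: "\<not> ?thesis"
    have "\<forall>u\<in>U. \<exists>l. \<not> G u l"
    proof
      fix u assume "u \<in> U"
      show "\<exists>l. \<not> G u l"
      proof (rule ccontr)
        assume "\<not> (\<exists>l. \<not> G u l)"
        then have "\<forall>l. G u l" by blast
        then have "u \<noteq> [] \<and> length u \<le> k - 1 \<and> (\<forall>l>0. \<exists>n>0. sublist (lpow u l) (v n))"
          unfolding G_def by blast
        then show False using neg by blast
      qed
    qed
    then obtain lb where lb: "\<forall>u\<in>U. \<not> G u (lb u)" by metis
    define l where "l = sum lb U"
    obtain u where u: "u \<in> U" "G u l" using claim by blast
    have "lb u \<le> l" unfolding l_def using member_le_sum[OF u(1) _ finU, of lb] by simp
    then have "G u (lb u)" using Gmono u(2) by blast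
    then show False using lb u(1) by blast
  qed
qed

end
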